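(* Let $\alpha > 1$ and let $H$ be a $k$-uniform hypergraph with $\lambda_\alpha(H) \ge \left(k!\binom{x}{k}\right)^{1-1/\alpha}$ for some real $x \ge k-1$. Then $e(\partial H) \ge \binom{x}{k-1}$.
   Context: For real $x$, $\binom{x}{m} = x(x-1)\cdots(x-m+1)/m!$. The shadow $\partial H$ of a $k$-uniform hypergraph $H$ is the $(k-1)$-uniform hypergraph consisting of all $(k-1)$-sets contained in some edge of $H$; $e(\cdot)$ denotes number of edges. For $H$ on $[n]$, $\tau_H(x,\dots,x) = k!\sum_{\{i_1,\dots,i_k\}\in E(H)} x_{i_1}\cdots x_{i_k}$ and $\lambda_\alpha(H) = \max\{\tau_H(x,\dots,x) : \|x\|_\alpha=1\}$, where $\|x\|_\alpha = (\sum_i|x_i|^\alpha)^{1/\alpha}$. *)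

theory Defs
  imports Complex_Main
begin

definition uniform_hypergraph :: "nat \<Rightarrow> nat \<Rightarrow> nat set set \<Rightarrow> bool" where
  "uniform_hypergraph n k E \<longleftrightarrow> (\<forall>e\<in>E. e \<subseteq> {..<n} \<and> card e = k)"

definition shadow :: "nat \<Rightarrow> nat set set \<Rightarrow> nat set set" where
  "shadow k E = {f. card f = k - 1 \<and> (\<exists>e\<in>E. f \<subseteq> e)}"

text \<open>tau_H(x,...,x) = k! * sum over edges of the product of the coordinates.\<close>
definition tau :: "nat \<Rightarrow> nat set set \<Rightarrow> (nat \<Rightarrow> real) \<Rightarrow> real" where
  "tau k E x = fact k * (\<Sum>e\<in>E. \<Prod>i\<in>e. x i)"

definition alpha_norm :: "nat \<Rightarrow> real \<Rightarrow> (nat \<Rightarrow> real) \<Rightarrow> real" where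
  "alpha_norm n \<alpha> x = (\<Sum>i<n. \<bar>x i\<bar> powr \<alpha>) powr (1 / \<alpha>)"

text \<open>lambda_alpha(H): maximum of tau over the unit alpha-sphere (attained by compactness).\<close>
definition lambda_alpha :: "nat \<Rightarrow> nat \<Rightarrow> real \<Rightarrow> nat set set \<Rightarrow> real" where
  "lambda_alpha n k \<alpha> E = Sup {tau k E x | x. alpha_norm n \<alpha> x = 1}"

end

theory Submission
  imports Defs "HOL-Analysis.Convex"
begin


definition sh :: "'a set set \<Rightarrow> 'a set set" where
  "sh F = {e - {x} | e x. e \<in> F \<and> x \<in> e}"
definition sw :: "'a \<Rightarrow> 'a \<Rightarrow> 'a set \<Rightarrow> 'a set" where
  "sw a j e = insert a (e - {j})"
definition mv :: "'a \<Rightarrow> 'a \<Rightarrow> 'a set set \<Rightarrow> 'a set \<Rightarrow> bool" where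
  "mv a j F e \<longleftrightarrow> e \<in> F \<and> j \<in> e \<and> a \<notin> e \<and> sw a j e \<notin> F"
definition cmpr :: "'a \<Rightarrow> 'a \<Rightarrow> 'a set set \<Rightarrow> 'a set set" where
  "cmpr a j F = (\<lambda>e. if mv a j F e then sw a j e else e) ` F"

lemma sw_inj:
  assumes "a \<noteq> j" "j \<in> e" "a \<notin> e" "j \<in> e'" "a \<notin> e'" "sw a j e = sw a j e'"
  shows "e = e'"
proof -
  have "e = insert j (sw a j e - {a})" "e' = insert j (sw a j e' - {a})"
    using assms unfolding sw_def by auto
  thus ?thesis using assms by simp
qed

lemma cmpr_card:
  assumes "a \<noteq> j" shows "card (cmpr a j F) = card F"
  unfolding cmpr_def
proof (rule card_image, rule inj_onI)
  fix e e' assume e: "e \<in> F" "e' \<in> F" and eq: "(if mv a j F e then sw a j e else e) = (if mv a j F e' then sw a j e' else e')"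
  show "e = e'"
  proof (cases "mv a j F e"; cases "mv a j F e'")
    assume "mv a j F e" "mv a j F e'" thus ?thesis using eq sw_inj[OF assms] unfolding mv_def by auto
  next
    assume "mv a j F e" "\<not> mv a j F e'" thus ?thesis using eq e unfolding mv_def by auto
  next
    assume "\<not>mv a j F e" "mv a j F e'" thus ?thesis using eq e unfolding mv_def by auto
  next
    assume "\<not>mv a j F e" "\<not>mv a j F e'" thus ?thesis using eq by auto
  qed
qed

lemma cmpr_I1: "g \<in> F \<Longrightarrow> \<not> mv a j F g \<Longrightarrow> g \<in> cmpr a j F"
  unfolding cmpr_def by (rule image_eqI[where x=g]) auto
lemma cmpr_I2: "mv a j F e \<Longrightarrow> sw a j e \<in> cmpr a j F"
  unfolding cmpr_def by (rule image_eqI[where x=e]) (auto simp: mv_def)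
lemma cmpr_E:
  assumes "g \<in> cmpr a j F"
  obtains "g \<in> F" "\<not> mv a j F g" | e where "mv a j F e" "g = sw a j e"
proof -
  from assms obtain e where e: "e \<in> F" "g = (if mv a j F e then sw a j e else e)" unfolding cmpr_def by blast
  show ?thesis
  proof (cases "mv a j F e")
    case True thus ?thesis using that e by simp
  next
    case False thus ?thesis using that e by simp
  qed
qed

lemma sh_cmpr:
  assumes "a \<noteq> j" shows "sh (cmpr a j F) \<subseteq> cmpr a j (sh F)"
proof
  fix g assume "g \<in> sh (cmpr a j F)"
  then obtain h x where h: "h \<in> cmpr a j F" "x \<in> h" "g = h - {x}" unfolding sh_def by auto
  show "g \<in> cmpr a j (sh F)"
  proof (cases "h \<in> F \<and> \<not> mv a j F h")
    case True
    have gsh: "g \<in> sh F" using True h unfolding sh_def by blast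
    show ?thesis
    proof (cases "mv a j (sh F) g")
      case False thus ?thesis using cmpr_I1[OF gsh] by blast
    next
      case True
      hence g: "j \<in> g" "a \<notin> g" "sw a j g \<notin> sh F" unfolding mv_def by auto
      show ?thesis
      proof (cases "a \<in> h")
        case True
        hence "x = a" using g h by auto
        hence "sw a j g = h - {j}" using h g True unfolding sw_def by auto
        moreover have "j \<in> h" using g h by auto
        ultimately have "sw a j g \<in> sh F" using \<open>h \<in> F \<and> \<not> mv a j F h\<close> unfolding sh_def by blast
        thus ?thesis using g by blast
      next
        case False
        hence "sw a j h \<in> F" using \<open>h \<in> F \<and> \<not> mv a j F h\<close> g h unfolding mv_def by auto
        moreover have "sw a j g = sw a j h - {x}" "x \<in> sw a j h" using h g False unfolding sw_def by auto
        ultimately have "sw a j g \<in> sh F" unfolding sh_def by blast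
        thus ?thesis using g by blast
      qed
    qed
  next
    case False
    from h(1) obtain e where e: "mv a j F e" "h = sw a j e"
      by (rule cmpr_E) (use False in blast)+
    hence e2: "e \<in> F" "j \<in> e" "a \<notin> e" "sw a j e \<notin> F" unfolding mv_def by auto
    show ?thesis
    proof (cases "x = a")
      case True
      hence "g = e - {j}" using h e e2 unfolding sw_def by auto
      have "g \<in> sh F" using e2 \<open>g = e - {j}\<close> unfolding sh_def by blast
      moreover have "\<not> mv a j (sh F) g" using \<open>g = e - {j}\<close> unfolding mv_def by auto
      ultimately show ?thesis by (rule cmpr_I1)
    next
      case False
      hence x: "x \<in> e" "x \<noteq> j" using h(2) e(2) unfolding sw_def by auto
      define g' where "g' = e - {x}"
      have "g' \<in> sh F" using x e2 unfolding g'_def sh_def by blast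
      moreover have "j \<in> g'" "a \<notin> g'" using x e2 unfolding g'_def by auto
      moreover have "sw a j g' = g" using x e2 h e False unfolding g'_def sw_def by auto
      ultimately have g': "g' \<in> sh F" "j \<in> g'" "a \<notin> g'" "sw a j g' = g" by auto
      show ?thesis
      proof (cases "g \<in> sh F")
        case True
        have "a \<in> g" using g' unfolding sw_def by auto
        hence "\<not> mv a j (sh F) g" unfolding mv_def by auto
        thus ?thesis using True by (rule cmpr_I1[rotated])
      next
        case False
        hence "mv a j (sh F) g'" using g' unfolding mv_def by auto
        thus ?thesis using g'(4) cmpr_I2 by metis
      qed
    qed
  qed
qed


definition unif :: "nat \<Rightarrow> 'a set set \<Rightarrow> bool" where
  "unif k F \<longleftrightarrow> finite F \<and> (\<forall>e\<in>F. finite e \<and> card e = k)"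

lemma cmpr_unif:
  assumes "a \<noteq> j" "unif k F" shows "unif k (cmpr a j F)"
proof -
  have "finite (cmpr a j F)" using assms unfolding cmpr_def unif_def by simp
  moreover have "finite g \<and> card g = k" if g: "g \<in> cmpr a j F" for g
  proof -
    from g consider "g \<in> F" | e where "mv a j F e" "g = sw a j e" by (rule cmpr_E) blast
    thus ?thesis
    proof cases
      case 1 thus ?thesis using assms unfolding unif_def by blast
    next
      case 2
      hence e: "e \<in> F" "j \<in> e" "a \<notin> e" unfolding mv_def by auto
      hence fe: "finite e" "card e = k" using assms unfolding unif_def by auto
      hence "0 < k" using e(2) card_gt_0_iff by blast
      hence "finite (sw a j e)" "card (sw a j e) = k" using e fe unfolding sw_def
        by (simp_all add: card_insert_if)
      thus ?thesis using 2 by simp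
    qed
  qed
  ultimately show ?thesis unfolding unif_def by blast
qed

lemma sh_finite: assumes "unif k F" shows "finite (sh F)"
proof -
  have "sh F = (\<Union>e\<in>F. (\<lambda>x. e - {x}) ` e)" unfolding sh_def by auto
  thus ?thesis using assms unfolding unif_def by auto
qed

lemma acnt_less:
  assumes "a \<noteq> j" "finite F" "mv a j F e"
  shows "card {g\<in>F. a \<in> g} < card {g\<in>cmpr a j F. a \<in> g}"
proof (rule psubset_card_mono)
  show "finite {g\<in>cmpr a j F. a \<in> g}" using assms unfolding cmpr_def by auto
  have sub: "{g\<in>F. a \<in> g} \<subseteq> {g\<in>cmpr a j F. a \<in> g}"
    using cmpr_I1[of _ F a j] by (auto simp: mv_def)
  have "sw a j e \<in> {g\<in>cmpr a j F. a \<in> g}" "sw a j e \<notin> {g\<in>F. a \<in> g}"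
    using assms(3) cmpr_I2[OF assms(3)] by (auto simp: mv_def sw_def)
  thus "{g\<in>F. a \<in> g} \<subset> {g\<in>cmpr a j F. a \<in> g}" using sub by blast
qed

lemma stable_exists:
  assumes "unif k F"
  shows "\<exists>G. unif k G \<and> card G = card F \<and> card (sh G) \<le> card (sh F) \<and>
    card {e\<in>F. a \<in> e} \<le> card {e\<in>G. a \<in> e} \<and> (\<forall>e\<in>G. \<forall>j\<in>e. a \<notin> e \<longrightarrow> sw a j e \<in> G)"
proof -
  define P where "P G \<longleftrightarrow> unif k G \<and> card G = card F \<and> card (sh G) \<le> card (sh F) \<and>
    card {e\<in>F. a \<in> e} \<le> card {e\<in>G. a \<in> e}" for G
  have "P F" unfolding P_def using assms by auto
  moreover have "\<forall>G. P G \<longrightarrow> card {e\<in>G. a \<in> e} < card F + 1"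
  proof safe
    fix G assume "P G"
    hence "card {e\<in>G. a \<in> e} \<le> card G" "card G = card F"
      unfolding P_def unif_def by (metis (mono_tags, lifting) card_mono mem_Collect_eq subsetI)+
    thus "card {e\<in>G. a \<in> e} < card F + 1" by simp
  qed
  ultimately obtain G where G: "P G" "\<forall>H. P H \<longrightarrow> card {e\<in>H. a \<in> e} \<le> card {e\<in>G. a \<in> e}"
    using Lattices_Big.ex_has_greatest_nat[of P F "\<lambda>G. card {e\<in>G. a \<in> e}"] by blast
  have "\<forall>e\<in>G. \<forall>j\<in>e. a \<notin> e \<longrightarrow> sw a j e \<in> G"
  proof (rule ccontr)
    assume "\<not> ?thesis"
    then obtain e j where ej: "e \<in> G" "j \<in> e" "a \<notin> e" "sw a j e \<notin> G" by blast
    hence aj: "a \<noteq> j" by auto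
    have mv: "mv a j G e" using ej unfolding mv_def by auto
    have uG: "unif k G" using G(1) unfolding P_def by auto
    have "P (cmpr a j G)"
    proof -
      have "card (sh (cmpr a j G)) \<le> card (cmpr a j (sh G))"
        using sh_cmpr[OF aj] by (intro card_mono) (auto simp: cmpr_def intro: sh_finite[OF uG])
      also have "\<dots> = card (sh G)" using cmpr_card[OF aj] .
      finally show ?thesis using G(1) cmpr_unif[OF aj uG] cmpr_card[OF aj, of G]
          acnt_less[OF aj _ mv] uG unfolding P_def unif_def by auto
    qed
    hence "card {e\<in>cmpr a j G. a \<in> e} \<le> card {e\<in>G. a \<in> e}" using G(2) by blast
    moreover have "card {e\<in>G. a \<in> e} < card {e\<in>cmpr a j G. a \<in> e}"
      using acnt_less[OF aj _ mv] uG unfolding unif_def by auto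
    ultimately show False by simp
  qed
  thus ?thesis using G(1) unfolding P_def by blast
qed


lemma gch_nonneg:
  fixes x :: real assumes "real k - 1 \<le> x" shows "0 \<le> x gchoose k"
  unfolding gbinomial_prod_rev using assms
  by (intro divide_nonneg_pos prod_nonneg) auto

lemma gch_mono:
  fixes x y :: real assumes "real k - 1 \<le> x" "x \<le> y" shows "x gchoose k \<le> y gchoose k"
  unfolding gbinomial_prod_rev using assms
  by (intro divide_right_mono prod_mono) auto

lemma gch_ge1:
  fixes x :: real assumes "real k \<le> x" shows "1 \<le> x gchoose k"
proof -
  have "(real k gchoose k) = 1" by (metis binomial_gbinomial binomial_n_n of_nat_1)
  thus ?thesis using gch_mono[of k "real k" x] assms by simp
qed

lemma gch_le:
  fixes x :: real assumes "real k \<le> x" "x \<le> real k + 1" shows "x gchoose k \<le> real k + 1"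
proof -
  have "(real (Suc k) gchoose k) = real (Suc k)"
    by (metis binomial_Suc_n binomial_gbinomial)
  thus ?thesis using gch_mono[of k x "real (Suc k)"] assms by simp
qed

lemma sh_card_lb:
  assumes "unif k F" "e \<in> F" shows "k \<le> card (sh F)"
proof -
  have "(\<lambda>x. e - {x}) ` e \<subseteq> sh F" using assms(2) unfolding sh_def by auto
  moreover have "inj_on (\<lambda>x. e - {x}) e" by (rule inj_onI) auto
  ultimately have "card e \<le> card (sh F)"
    using sh_finite[OF assms(1)] by (metis card_image card_mono)
  thus ?thesis using assms unfolding unif_def by auto
qed

lemma lovasz_aux:
  "\<forall>F (x::real). unif (Suc m) F \<longrightarrow> F \<noteq> {} \<longrightarrow> real m \<le> x \<longrightarrow> x gchoose Suc m \<le> card F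
     \<longrightarrow> x gchoose m \<le> card (sh F)"
proof (induction m)
  case 0
  show ?case
  proof (intro allI impI)
    fix F :: "'a set set" and x :: real assume u: "unif (Suc 0) F" and ne: "F \<noteq> {}"
      and "real 0 \<le> x" "x gchoose Suc 0 \<le> card F"
    have "sh F = {{}}"
    proof
      show "sh F \<subseteq> {{}}" using u unfolding sh_def unif_def by (auto simp: card_Suc_eq)
      obtain e where "e \<in> F" using ne by auto
      moreover then obtain y where "e = {y}" using u unfolding unif_def by (auto simp: card_Suc_eq)
      ultimately show "{{}} \<subseteq> sh F" unfolding sh_def by auto
    qed
    thus "x gchoose 0 \<le> real (card (sh F))" by simp
  qed
next
  case (Suc m)
  have main: "\<forall>(F::'a set set) (x::real). card F = N \<longrightarrow> unif (Suc (Suc m)) F \<longrightarrow> F \<noteq> {} \<longrightarrow> real (Suc m) \<le> x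
     \<longrightarrow> x gchoose Suc (Suc m) \<le> card F \<longrightarrow> x gchoose Suc m \<le> card (sh F)" for N
  proof (induction N rule: less_induct)
    case (less N)
    show ?case
    proof (intro allI impI)
      fix F :: "'a set set" and x :: real
      assume cF: "card F = N" and u: "unif (Suc (Suc m)) F" and ne: "F \<noteq> {}"
        and x: "real (Suc m) \<le> x" and big: "x gchoose Suc (Suc m) \<le> card F"
      obtain e where e: "e \<in> F" using ne by auto
      show "x gchoose Suc m \<le> card (sh F)"
      proof (cases "x \<le> real (Suc m) + 1")
        case True
        have "x gchoose Suc m \<le> real (Suc m) + 1" using gch_le[OF x True] .
        also have "\<dots> \<le> card (sh F)" using sh_card_lb[OF u e] by simp
        finally show ?thesis .
      next
        case False
        have "e \<noteq> {}" using u e unfolding unif_def by auto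
        then obtain a where a: "a \<in> e" by auto
        obtain G where G: "unif (Suc (Suc m)) G" "card G = card F" "card (sh G) \<le> card (sh F)"
          "card {e\<in>F. a \<in> e} \<le> card {e\<in>G. a \<in> e}" "\<forall>e\<in>G. \<forall>j\<in>e. a \<notin> e \<longrightarrow> sw a j e \<in> G"
          using stable_exists[OF u, of a] by blast
        have finG: "finite G" using G(1) unfolding unif_def by auto
        define F0 where "F0 = {e\<in>G. a \<notin> e}"
        define A where "A = {e\<in>G. a \<in> e}"
        define F1 where "F1 = (\<lambda>e. e - {a}) ` A"
        have "card {e\<in>F. a \<in> e} \<ge> 1"
        proof -
          have "finite {e\<in>F. a \<in> e}" using u unfolding unif_def by auto
          moreover have "e \<in> {e\<in>F. a \<in> e}" using e a by auto
          ultimately show ?thesis by (metis One_nat_def Suc_leI card_gt_0_iff empty_iff)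
        qed
        hence cA: "card A \<ge> 1" using G(4) unfolding A_def by auto
        have finA: "finite A" "finite F0" using finG unfolding A_def F0_def by auto
        have cG: "card G = card F0 + card A"
        proof -
          have "G = F0 \<union> A" "F0 \<inter> A = {}" unfolding F0_def A_def by auto
          thus ?thesis using finA card_Un_disjoint by metis
        qed
        have injA: "inj_on (\<lambda>e. e - {a}) A" unfolding A_def by (rule inj_onI) blast
        have cF1: "card F1 = card A" unfolding F1_def using card_image[OF injA] .
        have finF1: "finite F1" unfolding F1_def using finA by auto
        have uF1: "unif (Suc m) F1" using G(1) finF1 unfolding unif_def F1_def A_def by auto
        have uF0: "unif (Suc (Suc m)) F0" using G(1) finA unfolding unif_def F0_def by auto
        have shF0: "sh F0 \<subseteq> F1"
        proof
          fix f assume "f \<in> sh F0"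
          then obtain h y where h: "h \<in> G" "a \<notin> h" "y \<in> h" "f = h - {y}" unfolding sh_def F0_def by auto
          have "sw a y h \<in> G" using G(5) h by blast
          moreover have "f = sw a y h - {a}" using h unfolding sw_def by auto
          ultimately show "f \<in> F1" unfolding F1_def A_def sw_def by auto
        qed
        have x1: "real (Suc m) \<le> x - 1" using False by auto
        have pas: "x gchoose Suc (Suc m) = ((x - 1) gchoose Suc m) + ((x - 1) gchoose Suc (Suc m))"
          "x gchoose Suc m = ((x - 1) gchoose m) + ((x - 1) gchoose Suc m)"
          using gbinomial_Suc_Suc[of "x - 1"] by simp_all
        have c1: "(x - 1) gchoose Suc m \<le> card F1"
        proof (rule ccontr)
          assume nc: "\<not> ?thesis"
          have "real (card F0) = real (card F) - card A" using cG G(2) by simp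
          hence F0big: "(x - 1) gchoose Suc (Suc m) < card F0" using nc big pas(1) cF1 by linarith
          have "0 \<le> (x - 1) gchoose Suc (Suc m)" using gch_nonneg[of "Suc (Suc m)" "x - 1"] x1 by simp
          hence "F0 \<noteq> {}" using F0big by auto
          moreover have "card F0 < N" using cG G(2) cF cA by simp
          ultimately have "(x - 1) gchoose Suc m \<le> card (sh F0)"
            using less.IH[OF \<open>card F0 < N\<close>, rule_format, of F0 "x - 1"] uF0 x1 F0big by auto
          also have "\<dots> \<le> card F1" using card_mono[OF finF1 shF0] by simp
          finally show False using nc by simp
        qed
        have "1 \<le> (x - 1) gchoose Suc m" using gch_ge1 x1 by simp
        hence "F1 \<noteq> {}" using c1 by auto
        hence c2: "(x - 1) gchoose m \<le> card (sh F1)"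
          using Suc.IH uF1 x1 c1 by auto
        have disj: "F1 \<inter> insert a ` sh F1 = {}" unfolding F1_def by auto
        have sub: "F1 \<union> insert a ` sh F1 \<subseteq> sh G"
        proof safe
          fix f assume "f \<in> F1"
          then obtain h where "h \<in> G" "a \<in> h" "f = h - {a}" unfolding F1_def A_def by auto
          thus "f \<in> sh G" unfolding sh_def by auto
        next
          fix f assume "f \<in> sh F1"
          then obtain h y where h: "h \<in> G" "a \<in> h" "y \<in> h - {a}" "f = h - {a} - {y}"
            unfolding sh_def F1_def A_def by auto
          hence "insert a f = h - {y}" by auto
          thus "insert a f \<in> sh G" using h unfolding sh_def by auto
        qed
        have injI: "inj_on (insert a) (sh F1)"
        proof (rule inj_onI)
          fix f g assume "f \<in> sh F1" "g \<in> sh F1" "insert a f = insert a g"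
          moreover have "a \<notin> f" "a \<notin> g" using \<open>f \<in> sh F1\<close> \<open>g \<in> sh F1\<close> unfolding sh_def F1_def by auto
          ultimately show "f = g" by (metis insert_ident)
        qed
        have finsh: "finite (sh F1)" using sh_finite[OF uF1] .
        have "card F1 + card (sh F1) = card (F1 \<union> insert a ` sh F1)"
          using card_Un_disjoint[OF finF1 _ disj] finsh card_image[OF injI] by simp
        also have "\<dots> \<le> card (sh G)" using card_mono[OF sh_finite[OF G(1)] sub] .
        finally have "card F1 + card (sh F1) \<le> card (sh F)" using G(3) by simp
        hence "real (card F1) + real (card (sh F1)) \<le> card (sh F)" by linarith
        thus ?thesis using pas(2) c1 c2 by linarith
      qed
    qed
  qed
  show ?case using main by blast
qed

lemma lovasz:
  fixes x :: real
  assumes "1 \<le> k" "unif k F" "F \<noteq> {}" "real k - 1 \<le> x" "x gchoose k \<le> card F"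
  shows "x gchoose (k - 1) \<le> card (sh F)"
proof -
  obtain m where k: "k = Suc m" using assms(1) by (cases k) auto
  show ?thesis using lovasz_aux[of m] assms k by auto
qed



lemma bin_lb:
  fixes s t :: real assumes "0 \<le> s" "0 \<le> t"
  shows "s ^ Suc m + real (Suc m) * t * s ^ m \<le> (s + t) ^ Suc m"
proof (induction m)
  case 0 thus ?case by simp
next
  case (Suc m)
  have "(s + t) ^ Suc (Suc m) = (s + t) * (s + t) ^ Suc m" by simp
  also have "\<dots> \<ge> (s + t) * (s ^ Suc m + real (Suc m) * t * s ^ m)"
    using Suc assms by (intro mult_left_mono) auto
  finally have "(s + t) ^ Suc (Suc m) \<ge> (s + t) * (s ^ Suc m + real (Suc m) * t * s ^ m)" .
  moreover have "(s + t) * (s ^ Suc m + real (Suc m) * t * s ^ m) \<ge> s ^ Suc (Suc m) + real (Suc (Suc m)) * t * s ^ Suc m"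
  proof -
    have "(s + t) * (s ^ Suc m + real (Suc m) * t * s ^ m) = s ^ Suc (Suc m) + real (Suc (Suc m)) * t * s ^ Suc m + real (Suc m) * t * t * s ^ m"
      by (simp add: algebra_simps)
    moreover have "0 \<le> real (Suc m) * t * t * s ^ m" using assms by simp
    ultimately show ?thesis by linarith
  qed
  ultimately show ?case by linarith
qed

lemma ksets_insert:
  assumes "finite I" "a \<notin> I"
  shows "{e. e \<subseteq> insert a I \<and> card e = Suc m} = {e. e \<subseteq> I \<and> card e = Suc m} \<union> insert a ` {e. e \<subseteq> I \<and> card e = m}"
proof (intro equalityI subsetI)
  fix e assume "e \<in> {e. e \<subseteq> insert a I \<and> card e = Suc m}"
  hence e: "e \<subseteq> insert a I" "card e = Suc m" by auto
  have fe: "finite e" using e(1) assms(1) finite_subset by blast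
  show "e \<in> {e. e \<subseteq> I \<and> card e = Suc m} \<union> insert a ` {e. e \<subseteq> I \<and> card e = m}"
  proof (cases "a \<in> e")
    case True
    hence "e = insert a (e - {a})" "e - {a} \<subseteq> I" "card (e - {a}) = m" using e fe assms by auto
    thus ?thesis by blast
  next
    case False thus ?thesis using e by auto
  qed
next
  fix e assume "e \<in> {e. e \<subseteq> I \<and> card e = Suc m} \<union> insert a ` {e. e \<subseteq> I \<and> card e = m}"
  then consider "e \<subseteq> I" "card e = Suc m" | f where "e = insert a f" "f \<subseteq> I" "card f = m" by auto
  thus "e \<in> {e. e \<subseteq> insert a I \<and> card e = Suc m}"
  proof cases
    case 1 thus ?thesis by auto
  next
    case 2
    hence "finite f" "a \<notin> f" using assms finite_subset by auto
    thus ?thesis using 2 by auto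
  qed
qed

lemma multinom:
  fixes w :: "'a \<Rightarrow> real"
  assumes "finite I" "\<And>i. i \<in> I \<Longrightarrow> 0 \<le> w i"
  shows "fact k * (\<Sum>e\<in>{e. e \<subseteq> I \<and> card e = k}. \<Prod>i\<in>e. w i) \<le> (\<Sum>i\<in>I. w i) ^ k"
  using assms
proof (induction I arbitrary: k rule: finite_induct)
  case empty
  have "{e. e \<subseteq> {} \<and> card e = k} = (if k = 0 then {{}} else {})" by auto
  show ?case unfolding \<open>{e. e \<subseteq> {} \<and> card e = k} = _\<close> by (cases k) simp_all
next
  case (insert a I)
  have nn: "\<And>i. i \<in> I \<Longrightarrow> 0 \<le> w i" using insert by auto
  show ?case
  proof (cases k)
    case 0
    have "{e. e \<subseteq> insert a I \<and> card e = 0} = {{}}"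
      using insert(1) by (auto dest: finite_subset)
    thus ?thesis using 0 by simp
  next
    case (Suc m)
    define P where "P j = (\<Sum>e\<in>{e. e \<subseteq> I \<and> card e = j}. \<Prod>i\<in>e. w i)" for j
    define s where "s = (\<Sum>i\<in>I. w i)"
    have s0: "0 \<le> s" unfolding s_def using nn by (simp add: sum_nonneg)
    have wa: "0 \<le> w a" using insert by auto
    have finK: "finite {e. e \<subseteq> I \<and> card e = j}" for j using insert(1) by simp
    have disj: "{e. e \<subseteq> I \<and> card e = Suc m} \<inter> insert a ` {e. e \<subseteq> I \<and> card e = m} = {}"
      using insert(2) by auto
    have inj: "inj_on (insert a) {e. e \<subseteq> I \<and> card e = m}"
      using insert(2) by (intro inj_onI) (metis insert_ident subsetD mem_Collect_eq)
    have "(\<Sum>e\<in>{e. e \<subseteq> insert a I \<and> card e = Suc m}. \<Prod>i\<in>e. w i)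
        = P (Suc m) + (\<Sum>e\<in>insert a ` {e. e \<subseteq> I \<and> card e = m}. \<Prod>i\<in>e. w i)"
      unfolding ksets_insert[OF insert(1,2)] P_def
      by (rule sum.union_disjoint) (use finK disj in auto)
    also have "(\<Sum>e\<in>insert a ` {e. e \<subseteq> I \<and> card e = m}. \<Prod>i\<in>e. w i) = w a * P m"
    proof -
      have "(\<Sum>e\<in>insert a ` {e. e \<subseteq> I \<and> card e = m}. \<Prod>i\<in>e. w i)
          = (\<Sum>e\<in>{e. e \<subseteq> I \<and> card e = m}. \<Prod>i\<in>insert a e. w i)"
        using sum.reindex[OF inj] by simp
      also have "\<dots> = (\<Sum>e\<in>{e. e \<subseteq> I \<and> card e = m}. w a * (\<Prod>i\<in>e. w i))"
      proof (rule sum.cong)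
        fix e assume "e \<in> {e. e \<subseteq> I \<and> card e = m}"
        hence "finite e" "a \<notin> e" using insert(1,2) finite_subset by auto
        thus "(\<Prod>i\<in>insert a e. w i) = w a * (\<Prod>i\<in>e. w i)" by simp
      qed simp
      finally show ?thesis unfolding P_def by (simp add: sum_distrib_left)
    qed
    finally have eq: "(\<Sum>e\<in>{e. e \<subseteq> insert a I \<and> card e = Suc m}. \<Prod>i\<in>e. w i) = P (Suc m) + w a * P m" .
    have ih1: "fact (Suc m) * P (Suc m) \<le> s ^ Suc m" using insert.IH[OF nn] unfolding P_def s_def by blast
    have ih2: "fact m * P m \<le> s ^ m" using insert.IH[OF nn] unfolding P_def s_def by blast
    have "fact (Suc m) * (P (Suc m) + w a * P m) = fact (Suc m) * P (Suc m) + real (Suc m) * w a * (fact m * P m)"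
      by (simp add: algebra_simps)
    also have "\<dots> \<le> s ^ Suc m + real (Suc m) * w a * s ^ m"
      using ih1 ih2 wa by (intro add_mono mult_left_mono) auto
    also have "\<dots> \<le> (s + w a) ^ Suc m" using bin_lb[OF s0 wa] .
    finally show ?thesis using eq Suc insert(1,2) unfolding s_def by (simp add: add.commute)
  qed
qed


lemma sum_powr_bound:
  fixes z :: "'b \<Rightarrow> real"
  assumes fin: "finite E" and nn: "\<And>e. e \<in> E \<Longrightarrow> 0 \<le> z e" and al: "1 \<le> \<alpha>"
  shows "(\<Sum>e\<in>E. z e) \<le> real (card E) powr (1 - 1/\<alpha>) * (\<Sum>e\<in>E. z e powr \<alpha>) powr (1/\<alpha>)"
proof -
  define E' where "E' = {e\<in>E. 0 < z e}"
  have finE': "finite E'" "E' \<subseteq> E" using fin unfolding E'_def by auto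
  have sumeq: "(\<Sum>e\<in>E. z e) = (\<Sum>e\<in>E'. z e)"
  proof -
    have "(\<Sum>e\<in>E'. z e) = (\<Sum>e\<in>E. if 0 < z e then z e else 0)"
      unfolding E'_def by (simp add: sum.inter_filter[OF fin])
    also have "\<dots> = (\<Sum>e\<in>E. z e)" using nn by (intro sum.cong) (auto simp: less_le)
    finally show ?thesis by simp
  qed
  have Ble: "(\<Sum>e\<in>E'. z e powr \<alpha>) \<le> (\<Sum>e\<in>E. z e powr \<alpha>)"
    by (rule sum_mono2[OF fin finE'(2)]) auto
  have rhs_nn: "0 \<le> real (card E) powr (1 - 1/\<alpha>) * (\<Sum>e\<in>E. z e powr \<alpha>) powr (1/\<alpha>)" by simp
  show ?thesis
  proof (cases "E' = {}")
    case True thus ?thesis using sumeq rhs_nn by simp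
  next
    case False
    define m where "m = real (card E')"
    have m0: "0 < m" unfolding m_def using False finE' by (simp add: card_gt_0_iff)
    define A where "A = (\<Sum>e\<in>E'. z e)"
    define B where "B = (\<Sum>e\<in>E'. z e powr \<alpha>)"
    have A0: "0 \<le> A" unfolding A_def using nn finE' by (intro sum_nonneg) auto
    have B0: "0 \<le> B" unfolding B_def by (intro sum_nonneg) auto
    have "(\<Sum>i\<in>E'. (1/m) *\<^sub>R z i) powr \<alpha> \<le> (\<Sum>i\<in>E'. (1/m) * z i powr \<alpha>)"
      using convex_on_sum[OF finE'(1) False powr_convex[OF al], of "\<lambda>_. 1/m" z] m0
      unfolding m_def by (auto simp: E'_def)
    hence "(A / m) powr \<alpha> \<le> B / m"
      unfolding A_def B_def by (simp add: sum_distrib_left[symmetric] divide_inverse mult.commute)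
    hence "((A / m) powr \<alpha>) powr (1/\<alpha>) \<le> (B / m) powr (1/\<alpha>)"
      using al by (intro powr_mono2) auto
    moreover have "((A / m) powr \<alpha>) powr (1/\<alpha>) = A / m"
      using al A0 m0 by (simp add: powr_powr)
    ultimately have "A / m \<le> B powr (1/\<alpha>) / m powr (1/\<alpha>)" by (simp add: powr_divide)
    hence "A \<le> m * B powr (1/\<alpha>) / m powr (1/\<alpha>)" using m0 by (simp add: field_simps)
    also have "m * B powr (1/\<alpha>) / m powr (1/\<alpha>) = m powr (1 - 1/\<alpha>) * B powr (1/\<alpha>)"
      using m0 by (simp add: powr_diff)
    also have "\<dots> \<le> real (card E) powr (1 - 1/\<alpha>) * (\<Sum>e\<in>E. z e powr \<alpha>) powr (1/\<alpha>)"
    proof (intro mult_mono powr_mono2)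
      show "m \<le> real (card E)" unfolding m_def using card_mono[OF fin finE'(2)] by simp
      show "B \<le> (\<Sum>e\<in>E. z e powr \<alpha>)" using Ble unfolding B_def .
    qed (use al m0 B0 in auto)
    finally show ?thesis using sumeq unfolding A_def by simp
  qed
qed

lemma tau_le:
  assumes al: "1 < \<alpha>" and u: "uniform_hypergraph n k E" and y: "alpha_norm n \<alpha> y = 1"
  shows "tau k E y \<le> (fact k * real (card E)) powr (1 - 1/\<alpha>)"
proof -
  define w where "w i = \<bar>y i\<bar> powr \<alpha>" for i
  define S where "S = (\<Sum>i<n. w i)"
  have S0: "0 \<le> S" unfolding S_def w_def by (simp add: sum_nonneg)
  have "S powr (1/\<alpha>) = 1" using y unfolding alpha_norm_def S_def w_def .
  hence "(S powr (1/\<alpha>)) powr \<alpha> = 1" by simp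
  hence S1: "S = 1" using S0 al by (simp add: powr_powr)
  define Ek where "Ek = {e. e \<subseteq> {..<n} \<and> card e = k}"
  have EEk: "E \<subseteq> Ek" using u unfolding uniform_hypergraph_def Ek_def by auto
  have finEk: "finite Ek" unfolding Ek_def by (rule finite_subset[of _ "Pow {..<n}"]) auto
  have finE: "finite E" using finite_subset[OF EEk finEk] .
  define z where "z e = (\<Prod>i\<in>e. \<bar>y i\<bar>)" for e
  have z0: "0 \<le> z e" for e unfolding z_def by (simp add: prod_nonneg)
  have h1: "(\<Sum>e\<in>E. \<Prod>i\<in>e. y i) \<le> (\<Sum>e\<in>E. z e)"
    unfolding z_def by (intro sum_mono) (metis abs_ge_self abs_prod)
  have h2: "(\<Sum>e\<in>E. z e powr \<alpha>) = (\<Sum>e\<in>E. \<Prod>i\<in>e. w i)"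
    unfolding z_def w_def by (simp add: prod_powr_distrib)
  have h3: "(\<Sum>e\<in>E. \<Prod>i\<in>e. w i) \<le> (\<Sum>e\<in>Ek. \<Prod>i\<in>e. w i)"
    by (rule sum_mono2[OF finEk EEk]) (auto simp: w_def prod_nonneg)
  have "fact k * (\<Sum>e\<in>Ek. \<Prod>i\<in>e. w i) \<le> S ^ k"
    unfolding Ek_def S_def by (rule multinom) (auto simp: w_def)
  hence "fact k * (\<Sum>e\<in>E. \<Prod>i\<in>e. w i) \<le> 1"
  proof -
    have "fact k * (\<Sum>e\<in>E. \<Prod>i\<in>e. w i) \<le> fact k * (\<Sum>e\<in>Ek. \<Prod>i\<in>e. w i)"
      using h3 by (intro mult_left_mono) auto
    thus ?thesis using \<open>fact k * (\<Sum>e\<in>Ek. \<Prod>i\<in>e. w i) \<le> S ^ k\<close> S1 by (metis order_trans power_one)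
  qed
  hence h4: "(\<Sum>e\<in>E. z e powr \<alpha>) \<le> 1 / fact k"
    using h2 by (simp add: pos_le_divide_eq mult.commute)
  have "(\<Sum>e\<in>E. z e) \<le> real (card E) powr (1 - 1/\<alpha>) * (\<Sum>e\<in>E. z e powr \<alpha>) powr (1/\<alpha>)"
    using sum_powr_bound[OF finE, of z \<alpha>] z0 al by simp
  also have "\<dots> \<le> real (card E) powr (1 - 1/\<alpha>) * (1 / fact k) powr (1/\<alpha>)"
    using h4 al by (intro mult_left_mono powr_mono2) (auto intro: sum_nonneg)
  finally have h5: "(\<Sum>e\<in>E. z e) \<le> real (card E) powr (1 - 1/\<alpha>) * (1 / fact k) powr (1/\<alpha>)" .
  have fk: "(0::real) < fact k" by simp
  have "tau k E y \<le> fact k * (real (card E) powr (1 - 1/\<alpha>) * (1 / fact k) powr (1/\<alpha>))"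
    unfolding tau_def using h1 h5 fk by (intro mult_left_mono) auto
  also have "\<dots> = (fact k * real (card E)) powr (1 - 1/\<alpha>)"
  proof -
    have "fact k * (1 / fact k) powr (1/\<alpha>) = (fact k :: real) powr (1 - 1/\<alpha>)"
      using fk by (simp add: powr_divide powr_diff)
    thus ?thesis by (simp add: powr_mult mult_ac)
  qed
  finally show ?thesis .
qed

lemma shadow_sh:
  assumes k: "1 \<le> k" and u: "unif k E" shows "shadow k E = sh E"
proof (intro equalityI subsetI)
  fix f assume "f \<in> shadow k E"
  then obtain e where f: "card f = k - 1" "e \<in> E" "f \<subseteq> e" unfolding shadow_def by auto
  have fe: "finite e" "card e = k" using u f unfolding unif_def by auto
  hence "card (e - f) = 1" using f k card_Diff_subset[OF finite_subset[OF f(3) fe(1)] f(3)] by simp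
  then obtain x where "e - f = {x}" using card_1_singletonE by blast
  hence "f = e - {x}" "x \<in> e" using f by auto
  thus "f \<in> sh E" using f unfolding sh_def by blast
next
  fix f assume "f \<in> sh E"
  then obtain e x where "e \<in> E" "x \<in> e" "f = e - {x}" unfolding sh_def by auto
  moreover hence "card f = k - 1" using u unfolding unif_def by auto
  ultimately show "f \<in> shadow k E" unfolding shadow_def by auto
qed

theorem corollary6:
  fixes n k :: nat and \<alpha> x :: real and E :: "nat set set"
  assumes "k \<ge> 1"
    and "uniform_hypergraph n k E"
    and "E \<noteq> {}"
    and "\<alpha> > 1"
    and "x \<ge> real k - 1"
    and "lambda_alpha n k \<alpha> E \<ge> (fact k * (x gchoose k)) powr (1 - 1 / \<alpha>)"
  shows "real (card (shadow k E)) \<ge> x gchoose (k - 1)"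
proof -
  have finE: "finite E"
    by (rule finite_subset[of _ "Pow {..<n}"]) (use assms(2) in \<open>auto simp: uniform_hypergraph_def\<close>)
  have u: "unif k E" using assms(2) finE unfolding uniform_hypergraph_def unif_def
    by (auto intro: finite_subset)
  obtain e where e: "e \<in> E" using assms(3) by auto
  have "card e = k" "e \<subseteq> {..<n}" using e assms(2) unfolding uniform_hypergraph_def by auto
  hence "e \<noteq> {}" using assms(1) by auto
  hence n0: "0 < n" using \<open>e \<subseteq> {..<n}\<close> by auto
  define p where "p = 1 - 1 / \<alpha>"
  have p0: "0 < p" unfolding p_def using assms(4) by (simp add: field_simps)
  define y0 :: "nat \<Rightarrow> real" where "y0 i = (if i = 0 then 1 else 0)" for i
  have "(\<Sum>i<n. \<bar>y0 i\<bar> powr \<alpha>) = (\<Sum>i<n. if i = 0 then 1 else 0)"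
    unfolding y0_def by (intro sum.cong) auto
  also have "\<dots> = 1" using n0 by simp
  finally have "alpha_norm n \<alpha> y0 = 1" unfolding alpha_norm_def by simp
  hence ne: "{tau k E y | y. alpha_norm n \<alpha> y = 1} \<noteq> {}" by blast
  have "lambda_alpha n k \<alpha> E \<le> (fact k * real (card E)) powr p"
    unfolding lambda_alpha_def p_def
    by (rule cSup_least[OF ne]) (use tau_le[OF assms(4) assms(2)] in blast)
  hence le: "(fact k * (x gchoose k)) powr p \<le> (fact k * real (card E)) powr p"
    using assms(6) unfolding p_def by linarith
  have C0: "0 \<le> x gchoose k" using gch_nonneg assms(5) by simp
  have Cle: "x gchoose k \<le> real (card E)"
  proof (rule ccontr)
    assume "\<not> ?thesis"
    hence "fact k * real (card E) < fact k * (x gchoose k)" by simp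
    hence "(fact k * real (card E)) powr p < (fact k * (x gchoose k)) powr p"
      using p0 by (intro powr_less_mono2) auto
    thus False using le by simp
  qed
  have "x gchoose (k - 1) \<le> real (card (sh E))"
    using lovasz[OF assms(1) u assms(3) assms(5) Cle] .
  thus ?thesis using shadow_sh[OF assms(1) u] by simp
qed

end
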